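(* For every $l\in\mathbb Z/n\mathbb Z$, the generating series satisfy $b'_l(u)=b_l(u+d_l)$ in $\mathcal Y_{\underline d}[[u^{-1}]]$, where $b_l(u+d_l)=\sum_{s\ge0}b_{l,s}(u+d_l)^{-s-1}$ is expanded in powers of $u^{-1}$.
   Context: Fix $n\ge1$, nonnegative integers $\underline d=(d_l)_{l\in\mathbb Z/n\mathbb Z}$. Let $\mathfrak a_{\underline d}$ be the Lie algebra with basis $e_{l,ij},e'_{l,ij}$ ($1\le i,j\le d_l$), $q_{l,i},p_{l,i}$ ($1\le i\le d_l$), $f_{l,ij}$ ($1\le i\le d_{l+1}$, $1\le j\le d_l$), $l\in\mathbb Z/n\mathbb Z$, with brackets $[e_{l,ij},e_{l,km}]=\delta_{jk}e_{l,im}-\delta_{im}e_{l,kj}$ and likewise for $e'$; $[e_{l,ij},q_{l,k}]=\delta_{jk}q_{l,i}$; $[e'_{l,ij},p_{l,k}]=-\delta_{ki}p_{l,j}$; $[q_{l,j},p_{l+1,i}]=f_{l,ij}$; $[e_{l,ij},f_{l,mk}]=\delta_{jk}f_{l,mi}$; $[e'_{l+1,ij},f_{l,mk}]=-\delta_{mi}f_{l,jk}$; all other brackets zero. Let $R\subset U(\mathfrak a_{\underline d})$ be spanned by $\sum_{m=1}^{d_l}e_{l,mj}f_{l,im}+\sum_{m=1}^{d_{l+1}}f_{l,mj}e'_{l+1,im}+\tfrac12(p_{l+1,i}q_{l,j}+q_{l,j}p_{l+1,i})$, and $\mathfrak{gl}(V_{\underline d})_{\rm diag}$ be spanned by $e_{l,ij}+e'_{l,ij}$;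 $\mathcal Y_{\underline d}:=\big(U(\mathfrak a_{\underline d})/U(\mathfrak a_{\underline d})(R+\mathfrak{gl}(V_{\underline d})_{\rm diag})\big)^{\mathfrak{gl}(V_{\underline d})_{\rm diag}}$. Let $b_{l,s}$ be the image of $\sum p_{l,i_1}e_{l,i_1i_2}\cdots e_{l,i_si_{s+1}}q_{l,i_{s+1}}$, $b'_{l,s}$ the image of $(-1)^s\sum p_{l,i_1}e'_{l,i_1i_2}\cdots e'_{l,i_si_{s+1}}q_{l,i_{s+1}}$ ($s\ge0$), and $b_l(u)=\sum_{s\ge0}b_{l,s}u^{-s-1}$, $b'_l(u)=\sum_{s\ge0}b'_{l,s}u^{-s-1}$. *)

theory Defs
  imports Complex_Main
begin

text \<open>Generators of the Lie algebra a_d.  Indices are 0-based: l ranges over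
  0..n-1 (representing Z/nZ), and E l i j stands for e_{l,(i+1)(j+1)} etc.\<close>
datatype gen = E nat nat nat | E' nat nat nat | Q nat nat | P nat nat | F nat nat nat

definition suc_mod :: "nat \<Rightarrow> nat \<Rightarrow> nat" where
  "suc_mod n l = (l + 1) mod n"

fun valid_gen :: "nat \<Rightarrow> (nat \<Rightarrow> nat) \<Rightarrow> gen \<Rightarrow> bool" where
  "valid_gen n d (E l i j) = (l < n \<and> i < d l \<and> j < d l)"
| "valid_gen n d (E' l i j) = (l < n \<and> i < d l \<and> j < d l)"
| "valid_gen n d (Q l i) = (l < n \<and> i < d l)"
| "valid_gen n d (P l i) = (l < n \<and> i < d l)"
| "valid_gen n d (F l i j) = (l < n \<and> i < d (suc_mod n l) \<and> j < d l)"

text \<open>Elements of the free associative algebra on the generators, as coefficient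
  functions on words (only finitely supported ones are ever built).\<close>
type_synonym elt = "gen list \<Rightarrow> complex"

definition mono :: "gen list \<Rightarrow> elt" where
  "mono u = (\<lambda>w. if w = u then 1 else 0)"

abbreviation gn :: "gen \<Rightarrow> elt" where
  "gn x \<equiv> mono [x]"

definition zero_el :: elt where "zero_el = (\<lambda>w. 0)"
definition add_el :: "elt \<Rightarrow> elt \<Rightarrow> elt" where "add_el f g = (\<lambda>w. f w + g w)"
definition sub_el :: "elt \<Rightarrow> elt \<Rightarrow> elt" where "sub_el f g = (\<lambda>w. f w - g w)"
definition smult_el :: "complex \<Rightarrow> elt \<Rightarrow> elt" where "smult_el c f = (\<lambda>w. c * f w)"
definition sum_el :: "('a \<Rightarrow> elt) \<Rightarrow> 'a set \<Rightarrow> elt" where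
  "sum_el f A = (\<lambda>w. \<Sum>a\<in>A. f a w)"
definition mul_el :: "elt \<Rightarrow> elt \<Rightarrow> elt" where
  "mul_el f g = (\<lambda>w. \<Sum>k\<in>{..length w}. f (take k w) * g (drop k w))"

definition kd :: "nat \<Rightarrow> nat \<Rightarrow> complex" where
  "kd i j = (if i = j then 1 else 0)"

fun bra :: "nat \<Rightarrow> gen \<Rightarrow> gen \<Rightarrow> elt" where
  "bra n (E l i j) (E l' k m) = (if l = l' then
      sub_el (smult_el (kd j k) (gn (E l i m))) (smult_el (kd i m) (gn (E l k j))) else zero_el)"
| "bra n (E' l i j) (E' l' k m) = (if l = l' then
      sub_el (smult_el (kd j k) (gn (E' l i m))) (smult_el (kd i m) (gn (E' l k j))) else zero_el)"
| "bra n (E l i j) (Q l' k) = (if l = l' then smult_el (kd j k) (gn (Q l i)) else zero_el)"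
| "bra n (Q l' k) (E l i j) = (if l = l' then smult_el (- kd j k) (gn (Q l i)) else zero_el)"
| "bra n (E' l i j) (P l' k) = (if l = l' then smult_el (- kd k i) (gn (P l j)) else zero_el)"
| "bra n (P l' k) (E' l i j) = (if l = l' then smult_el (kd k i) (gn (P l j)) else zero_el)"
| "bra n (Q l j) (P l' i) = (if l' = suc_mod n l then gn (F l i j) else zero_el)"
| "bra n (P l' i) (Q l j) = (if l' = suc_mod n l then smult_el (-1) (gn (F l i j)) else zero_el)"
| "bra n (E l i j) (F l' m k) = (if l = l' then smult_el (kd j k) (gn (F l m i)) else zero_el)"
| "bra n (F l' m k) (E l i j) = (if l = l' then smult_el (- kd j k) (gn (F l m i)) else zero_el)"
| "bra n (E' l' i j) (F l m k) = (if l' = suc_mod n l then smult_el (- kd m i) (gn (F l j k)) else zero_el)"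
| "bra n (F l m k) (E' l' i j) = (if l' = suc_mod n l then smult_el (kd m i) (gn (F l j k)) else zero_el)"
| "bra n _ _ = zero_el"

definition commrel :: "nat \<Rightarrow> gen \<Rightarrow> gen \<Rightarrow> elt" where
  "commrel n x y = sub_el (sub_el (mul_el (gn x) (gn y)) (mul_el (gn y) (gn x))) (bra n x y)"

definition Rrel :: "nat \<Rightarrow> (nat \<Rightarrow> nat) \<Rightarrow> nat \<Rightarrow> nat \<Rightarrow> nat \<Rightarrow> elt" where
  "Rrel n d l i j =
     add_el (add_el
       (sum_el (\<lambda>m. mul_el (gn (E l m j)) (gn (F l i m))) {..<d l})
       (sum_el (\<lambda>m. mul_el (gn (F l m j)) (gn (E' (suc_mod n l) i m))) {..<d (suc_mod n l)}))
       (smult_el (1/2) (add_el (mul_el (gn (P (suc_mod n l) i)) (gn (Q l j)))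
                               (mul_el (gn (Q l j)) (gn (P (suc_mod n l) i)))))"

definition diagrel :: "nat \<Rightarrow> nat \<Rightarrow> nat \<Rightarrow> elt" where
  "diagrel l i j = add_el (gn (E l i j)) (gn (E' l i j))"

text \<open>Preimage in the free algebra of U(a) (R + gl_diag): the sum of the two-sided
  ideal of commutator relations and the left ideal generated by R and gl_diag.
  Membership of a difference in this set is equality in
  U(a)/U(a)(R + gl_diag), which contains Y_d.\<close>
inductive_set Jset :: "nat \<Rightarrow> (nat \<Rightarrow> nat) \<Rightarrow> elt set" for n d where
  zero: "zero_el \<in> Jset n d"
| comm: "\<lbrakk>list_all (valid_gen n d) u; list_all (valid_gen n d) v;
          valid_gen n d x; valid_gen n d y\<rbrakk>
         \<Longrightarrow> mul_el (mul_el (mono u) (commrel n x y)) (mono v) \<in> Jset n d"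
| rel: "\<lbrakk>list_all (valid_gen n d) u; l < n; i < d (suc_mod n l); j < d l\<rbrakk>
         \<Longrightarrow> mul_el (mono u) (Rrel n d l i j) \<in> Jset n d"
| diag: "\<lbrakk>list_all (valid_gen n d) u; l < n; i < d l; j < d l\<rbrakk>
         \<Longrightarrow> mul_el (mono u) (diagrel l i j) \<in> Jset n d"
| add: "\<lbrakk>a \<in> Jset n d; b \<in> Jset n d\<rbrakk> \<Longrightarrow> add_el a b \<in> Jset n d"
| smult: "a \<in> Jset n d \<Longrightarrow> smult_el c a \<in> Jset n d"

definition idx_lists :: "(nat \<Rightarrow> nat) \<Rightarrow> nat \<Rightarrow> nat \<Rightarrow> nat list set" where
  "idx_lists d l s = {is. length is = Suc s \<and> set is \<subseteq> {..<d l}}"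

definition bword :: "nat \<Rightarrow> nat \<Rightarrow> nat list \<Rightarrow> gen list" where
  "bword l s is = P l (is ! 0) # map (\<lambda>k. E l (is ! k) (is ! Suc k)) [0..<s] @ [Q l (is ! s)]"

definition bword' :: "nat \<Rightarrow> nat \<Rightarrow> nat list \<Rightarrow> gen list" where
  "bword' l s is = P l (is ! 0) # map (\<lambda>k. E' l (is ! k) (is ! Suc k)) [0..<s] @ [Q l (is ! s)]"

definition bgen :: "(nat \<Rightarrow> nat) \<Rightarrow> nat \<Rightarrow> nat \<Rightarrow> elt" where
  "bgen d l s = sum_el (\<lambda>is. mono (bword l s is)) (idx_lists d l s)"

definition bgen' :: "(nat \<Rightarrow> nat) \<Rightarrow> nat \<Rightarrow> nat \<Rightarrow> elt" where
  "bgen' d l s = smult_el ((-1) ^ s) (sum_el (\<lambda>is. mono (bword' l s is)) (idx_lists d l s))"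

text \<open>Coefficient of u^{-s-1} in the expansion of (u+c)^{-t-1} in powers of u^{-1}.\<close>
definition shift_coeff :: "complex \<Rightarrow> nat \<Rightarrow> nat \<Rightarrow> complex" where
  "shift_coeff c s t = (if t \<le> s then (- c) ^ (s - t) * of_nat (s choose t) else 0)"

end

theory Submission
  imports Defs
begin


lemma mul_el_assoc: "mul_el (mul_el f g) h = mul_el f (mul_el g h)"
proof (rule ext)
  fix w :: "gen list"
  define L where "L = length w"
  define F where "F = (\<lambda>j m. f (take j w) * g (take m (drop j w)) * h (drop m (drop j w)))"
  have "mul_el (mul_el f g) h w = (\<Sum>k\<le>L. \<Sum>j\<le>k. F j (k - j))"
    unfolding mul_el_def L_def F_def
    by (auto simp: sum_distrib_right min_def take_drop intro!: sum.cong)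
  also have "\<dots> = (\<Sum>(j,m)\<in>{(j,m). j+m \<le> L}. F j m)"
    by (rule sum.triangle_reindex_eq[symmetric])
  also have "\<dots> = (\<Sum>j\<le>L. \<Sum>m\<le>L-j. F j m)"
  proof -
    have "{(j,m). j+m \<le> L} = Sigma {..L} (\<lambda>j. {..L-j})" by auto
    then show ?thesis by (simp add: sum.Sigma)
  qed
  also have "\<dots> = mul_el f (mul_el g h) w"
    unfolding mul_el_def L_def F_def
    by (auto simp: sum_distrib_left mult.assoc intro!: sum.cong)
  finally show "mul_el (mul_el f g) h w = mul_el f (mul_el g h) w" .
qed




typedef fa = "UNIV :: elt set" by auto

instantiation fa :: ring_1
begin
definition "0 = Abs_fa zero_el"
definition "1 = Abs_fa (mono [])"
definition "x + y = Abs_fa (add_el (Rep_fa x) (Rep_fa y))"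
definition "x - y = Abs_fa (sub_el (Rep_fa x) (Rep_fa y))"
definition "- x = Abs_fa (smult_el (-1) (Rep_fa x))"
definition "x * y = Abs_fa (mul_el (Rep_fa x) (Rep_fa y))"

lemma mul_one_el: "mul_el (mono []) f = f" "mul_el f (mono []) = f"
proof -
  show "mul_el (mono []) f = f"
    by (rule ext) (simp add: mul_el_def mono_def sum.atMost_shift)
  show "mul_el f (mono []) = f"
  proof (rule ext)
    fix w :: "gen list"
    have "mul_el f (mono []) w = (\<Sum>k\<in>{..length w}. if k = length w then f w else 0)"
      unfolding mul_el_def mono_def by (rule sum.cong) auto
    then show "mul_el f (mono []) w = f w" by simp
  qed
qed

instance
  apply standard
  apply (simp_all add: zero_fa_def one_fa_def plus_fa_def minus_fa_def uminus_fa_def times_fa_def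
     Abs_fa_inverse Rep_fa_inverse mul_el_assoc mul_one_el add_el_def sub_el_def smult_el_def zero_el_def)
  apply (simp_all add: algebra_simps Rep_fa_inject[symmetric] Abs_fa_inverse mul_el_def sum.distrib
       sum_distrib_left sum_distrib_right mono_def)
  apply (metis fun_cong[where x="[]"] zero_neq_one)
  done
end




lemma Rep_add: "Rep_fa (x + y) = add_el (Rep_fa x) (Rep_fa y)"
  by (simp add: plus_fa_def Abs_fa_inverse)
lemma Rep_mul: "Rep_fa (x * y) = mul_el (Rep_fa x) (Rep_fa y)"
  by (simp add: times_fa_def Abs_fa_inverse)
lemma Rep_zero: "Rep_fa 0 = zero_el"
  by (simp add: zero_fa_def Abs_fa_inverse)
lemma Rep_one: "Rep_fa 1 = mono []"
  by (simp add: one_fa_def Abs_fa_inverse)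
lemma Rep_neg: "Rep_fa (- x) = smult_el (-1) (Rep_fa x)"
  by (simp add: uminus_fa_def Abs_fa_inverse)
lemma Rep_diff: "Rep_fa (x - y) = sub_el (Rep_fa x) (Rep_fa y)"
  by (simp add: minus_fa_def Abs_fa_inverse)

lemma Rep_sum: "Rep_fa (sum f A) = sum_el (\<lambda>a. Rep_fa (f a)) A"
proof (cases "finite A")
  case True then show ?thesis
    by (induction A rule: finite_induct)
       (auto simp: Rep_zero Rep_add sum_el_def zero_el_def add_el_def)
next
  case False then show ?thesis by (simp add: Rep_zero sum_el_def zero_el_def)
qed

lemma Rep_of_nat: "Rep_fa (of_nat k) = smult_el (of_nat k) (mono [])"
  by (induction k) (auto simp: Rep_zero Rep_add Rep_one smult_el_def zero_el_def add_el_def algebra_simps)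

lemma Rep_of_int: "Rep_fa (of_int k) = smult_el (of_int k) (mono [])"
proof (cases "k \<ge> 0")
  case True
  then obtain m where "k = int m" by (metis nonneg_eq_int)
  then show ?thesis by (simp add: Rep_of_nat)
next
  case False
  then obtain m where "k = - int m" by (metis le_cases neg_0_le_iff_le nonneg_eq_int minus_minus)
  then show ?thesis by (auto simp: Rep_of_nat Rep_neg smult_el_def)
qed

lemma mul_smult_el: "mul_el (smult_el c f) g = smult_el c (mul_el f g)"
   "mul_el f (smult_el c g) = smult_el c (mul_el f g)"
  by (auto simp: mul_el_def smult_el_def sum_distrib_left algebra_simps)

lemma Rep_of_int_mul: "Rep_fa (of_int k * x) = smult_el (of_int k) (Rep_fa x)"
  by (simp add: Rep_mul Rep_of_int mul_smult_el mul_one_el)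

lemma Rep_of_nat_mul: "Rep_fa (of_nat k * x) = smult_el (of_nat k) (Rep_fa x)"
  using Rep_of_int_mul[of "int k" x] by simp

lemma take_drop_iff:
  assumes "k \<le> length w"
  shows "(take k w = u \<and> drop k w = v) \<longleftrightarrow> (k = length u \<and> w = u @ v)"
proof
  assume h: "take k w = u \<and> drop k w = v"
  then have "length u = k" using assms by auto
  moreover have "w = u @ v" using h by (metis append_take_drop_id)
  ultimately show "k = length u \<and> w = u @ v" by simp
next
  assume "k = length u \<and> w = u @ v"
  then show "take k w = u \<and> drop k w = v" by simp
qed

lemma mono_mul: "mul_el (mono u) (mono v) = mono (u @ v)"
proof (rule ext)
  fix w :: "gen list"
  have "mul_el (mono u) (mono v) w = (\<Sum>k\<in>{..length w}. if k = length u \<and> w = u @ v then 1 else 0)"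
    unfolding mul_el_def mono_def
    by (rule sum.cong) (use take_drop_iff[of _ w u v] in auto)
  also have "\<dots> = mono (u @ v) w"
    by (cases "w = u @ v") (auto simp: mono_def)
  finally show "mul_el (mono u) (mono v) w = mono (u @ v) w" .
qed

definition M :: "gen list \<Rightarrow> fa" where "M u = Abs_fa (mono u)"

lemma Rep_M: "Rep_fa (M u) = mono u" by (simp add: M_def Abs_fa_inverse)

lemma M_append: "M (u @ v) = M u * M v"
  by (metis Rep_M Rep_fa_inject Rep_mul mono_mul)

lemma M_Nil: "M [] = 1" by (metis Rep_M Rep_fa_inject Rep_one)




inductive_set Sp :: "nat \<Rightarrow> (nat \<Rightarrow> nat) \<Rightarrow> fa set" for n d where
  gen: "list_all (valid_gen n d) u \<Longrightarrow> M u \<in> Sp n d"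
| add: "x \<in> Sp n d \<Longrightarrow> y \<in> Sp n d \<Longrightarrow> x + y \<in> Sp n d"
| neg: "x \<in> Sp n d \<Longrightarrow> - x \<in> Sp n d"

lemma Sp_one[simp]: "1 \<in> Sp n d"
  using Sp.gen[of n d "[]"] by (simp add: M_Nil)

lemma Sp_zero[simp]: "0 \<in> Sp n d"
  using Sp.add[OF Sp_one Sp.neg[OF Sp_one]] by simp

lemma Sp_diff: "x \<in> Sp n d \<Longrightarrow> y \<in> Sp n d \<Longrightarrow> x - y \<in> Sp n d"
  by (metis diff_conv_add_uminus Sp.add Sp.neg)

lemma Sp_mul: "x \<in> Sp n d \<Longrightarrow> y \<in> Sp n d \<Longrightarrow> x * y \<in> Sp n d"
proof (induction x rule: Sp.induct)
  case (gen u)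
  note hu = gen.hyps
  from gen.prems show ?case
  proof (induction y rule: Sp.induct)
    case (gen v) then show ?case using hu Sp.gen[of n d "u @ v"] by (simp add: M_append)
  next
    case (add y1 y2) then show ?case by (simp add: distrib_left Sp.add)
  next
    case (neg y) then show ?case by (simp add: Sp.neg)
  qed
next
  case (add x1 x2) then show ?case by (simp add: distrib_right Sp.add)
next
  case (neg x) then show ?case by (simp add: Sp.neg)
qed

lemma Sp_sum: "(\<And>a. a \<in> A \<Longrightarrow> f a \<in> Sp n d) \<Longrightarrow> sum f A \<in> Sp n d"
proof (cases "finite A")
  case True
  then show "(\<And>a. a \<in> A \<Longrightarrow> f a \<in> Sp n d) \<Longrightarrow> sum f A \<in> Sp n d"
    by (induction A rule: finite_induct) (auto intro: Sp.add)
qed simp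

lemma Sp_of_nat_mul: "x \<in> Sp n d \<Longrightarrow> of_nat k * x \<in> Sp n d"
  by (induction k) (auto simp: distrib_right intro: Sp.add)

lemma Sp_of_nat: "of_nat k \<in> Sp n d"
  using Sp_of_nat_mul[OF Sp_one] by simp

lemma Sp_of_int_mul: "x \<in> Sp n d \<Longrightarrow> of_int k * x \<in> Sp n d"
proof (cases "k \<ge> 0")
  case True
  then obtain m where "k = int m" by (metis nonneg_eq_int)
  then show "x \<in> Sp n d \<Longrightarrow> of_int k * x \<in> Sp n d" using Sp_of_nat_mul by simp
next
  case False
  then obtain m where "k = - int m" by (metis le_cases neg_0_le_iff_le nonneg_eq_int minus_minus)
  then show "x \<in> Sp n d \<Longrightarrow> of_int k * x \<in> Sp n d" using Sp_of_nat_mul Sp.neg by simp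
qed

lemma Sp_if: "x \<in> Sp n d \<Longrightarrow> (if b then x else 0) \<in> Sp n d"
  by simp

abbreviation J :: "nat \<Rightarrow> (nat \<Rightarrow> nat) \<Rightarrow> fa \<Rightarrow> bool" where
  "J n d x \<equiv> Rep_fa x \<in> Jset n d"

lemma J_zero[simp]: "J n d 0"
  by (simp add: Rep_zero Jset.zero)

lemma J_add: "J n d x \<Longrightarrow> J n d y \<Longrightarrow> J n d (x + y)"
  by (simp add: Rep_add Jset.add)

lemma J_neg: "J n d x \<Longrightarrow> J n d (- x)"
  by (simp add: Rep_neg Jset.smult)

lemma J_diff: "J n d x \<Longrightarrow> J n d y \<Longrightarrow> J n d (x - y)"
  by (metis diff_conv_add_uminus J_add J_neg)

lemma J_sum: "(\<And>a. a \<in> A \<Longrightarrow> J n d (f a)) \<Longrightarrow> J n d (sum f A)"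
proof (cases "finite A")
  case True
  then show "(\<And>a. a \<in> A \<Longrightarrow> J n d (f a)) \<Longrightarrow> J n d (sum f A)"
    by (induction A rule: finite_induct) (auto intro: J_add)
qed simp

lemma J_of_int_mul: "J n d x \<Longrightarrow> J n d (of_int k * x)"
  by (simp add: Rep_of_int_mul Jset.smult)

lemma mul_add_el: "mul_el f (add_el a b) = add_el (mul_el f a) (mul_el f b)"
  "mul_el (add_el a b) f = add_el (mul_el a f) (mul_el b f)"
  by (auto simp: mul_el_def add_el_def sum.distrib algebra_simps)

lemma mul_zero_el: "mul_el f zero_el = zero_el"
  by (auto simp: mul_el_def zero_el_def)

lemma Jset_left_mono: "a \<in> Jset n d \<Longrightarrow> list_all (valid_gen n d) w \<Longrightarrow> mul_el (mono w) a \<in> Jset n d"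
proof (induction a rule: Jset.induct)
  case zero then show ?case by (simp add: mul_zero_el Jset.zero)
next
  case (comm u v x y)
  then show ?case using Jset.comm[of n d "w @ u" v x y]
    by (simp add: mul_el_assoc[symmetric] mono_mul)
next
  case (rel u l i j)
  then show ?case using Jset.rel[of n d "w @ u" l i j]
    by (simp add: mul_el_assoc[symmetric] mono_mul)
next
  case (diag u l i j)
  then show ?case using Jset.diag[of n d "w @ u" l i j]
    by (simp add: mul_el_assoc[symmetric] mono_mul)
next
  case (add a b) then show ?case by (simp add: mul_add_el Jset.add)
next
  case (smult a c) then show ?case by (simp add: mul_smult_el Jset.smult)
qed

lemma J_left: "x \<in> Sp n d \<Longrightarrow> J n d y \<Longrightarrow> J n d (x * y)"
proof (induction x rule: Sp.induct)
  case (gen u) then show ?case by (simp add: Rep_mul Rep_M Jset_left_mono)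
next
  case (add x1 x2) then show ?case by (simp add: distrib_right J_add)
next
  case (neg x) then show ?case by (simp add: J_neg)
qed

definition G :: "gen \<Rightarrow> fa" where "G g = M [g]"

lemma J_comm_M: "list_all (valid_gen n d) u \<Longrightarrow> list_all (valid_gen n d) v \<Longrightarrow>
   valid_gen n d g \<Longrightarrow> valid_gen n d h \<Longrightarrow> J n d (M u * Abs_fa (commrel n g h) * M v)"
  by (simp add: Rep_mul Rep_M Abs_fa_inverse Jset.comm)

lemma J_comm: "x \<in> Sp n d \<Longrightarrow> y \<in> Sp n d \<Longrightarrow>
   valid_gen n d g \<Longrightarrow> valid_gen n d h \<Longrightarrow> J n d (x * Abs_fa (commrel n g h) * y)"
proof (induction x rule: Sp.induct)
  case (gen u)
  note hu = gen.hyps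
  from gen.prems show ?case
  proof (induction y rule: Sp.induct)
    case (gen v) then show ?case using J_comm_M hu by blast
  next
    case (add y1 y2) then show ?case by (simp add: distrib_left J_add)
  next
    case (neg y) then show ?case by (simp add: J_neg)
  qed
next
  case (add x1 x2) then show ?case by (simp add: distrib_right J_add)
next
  case (neg x) then show ?case by (simp add: J_neg)
qed

lemma J_diag: "x \<in> Sp n d \<Longrightarrow> l < n \<Longrightarrow> i < d l \<Longrightarrow> j < d l \<Longrightarrow>
   J n d (x * (G (E l i j) + G (E' l i j)))"
proof -
  assume "x \<in> Sp n d" "l < n" "i < d l" "j < d l"
  have "J n d (M [] * Abs_fa (diagrel l i j))"
    using Jset.diag[of n d "[]" l i j] \<open>l < n\<close> \<open>i < d l\<close> \<open>j < d l\<close>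
    by (simp add: Rep_mul Rep_M Abs_fa_inverse)
  moreover have "Abs_fa (diagrel l i j) = G (E l i j) + G (E' l i j)"
    by (simp add: diagrel_def G_def M_def plus_fa_def Abs_fa_inverse)
  ultimately have "J n d (G (E l i j) + G (E' l i j))" by (simp add: M_Nil)
  then show ?thesis using J_left[OF \<open>x \<in> Sp n d\<close>] by blast
qed




definition xc :: "nat \<Rightarrow> (nat \<Rightarrow> nat) \<Rightarrow> fa \<Rightarrow> fa \<Rightarrow> bool" where
  "xc n d a b \<longleftrightarrow> (\<forall>x\<in>Sp n d. \<forall>y\<in>Sp n d. J n d (x * (a - b) * y))"

lemma xc_eq: "a = b \<Longrightarrow> xc n d a b"
  by (simp add: xc_def)

lemma xc_sym: "xc n d a b \<Longrightarrow> xc n d b a"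
proof -
  assume h: "xc n d a b"
  show ?thesis unfolding xc_def
  proof (intro ballI)
    fix x y assume "x \<in> Sp n d" "y \<in> Sp n d"
    then have "J n d (- (x * (a - b) * y))" using h unfolding xc_def by (simp add: J_neg)
    moreover have "- (x * (a - b) * y) = x * (b - a) * y" by (simp add: algebra_simps)
    ultimately show "J n d (x * (b - a) * y)" by simp
  qed
qed

lemma xc_trans: "xc n d a b \<Longrightarrow> xc n d b c \<Longrightarrow> xc n d a c"
proof -
  assume h1: "xc n d a b" and h2: "xc n d b c"
  show "xc n d a c" unfolding xc_def
  proof (intro ballI)
    fix x y assume "x \<in> Sp n d" "y \<in> Sp n d"
    then have "J n d (x * (a - b) * y + x * (b - c) * y)"
      using h1 h2 unfolding xc_def by (simp add: J_add)
    moreover have "x * (a - b) * y + x * (b - c) * y = x * (a - c) * y"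
      by (simp add: algebra_simps)
    ultimately show "J n d (x * (a - c) * y)" by simp
  qed
qed

lemma xc_add: "xc n d a b \<Longrightarrow> xc n d c e \<Longrightarrow> xc n d (a + c) (b + e)"
proof -
  assume h1: "xc n d a b" and h2: "xc n d c e"
  show ?thesis unfolding xc_def
  proof (intro ballI)
    fix x y assume "x \<in> Sp n d" "y \<in> Sp n d"
    then have "J n d (x * (a - b) * y + x * (c - e) * y)"
      using h1 h2 unfolding xc_def by (simp add: J_add)
    moreover have "x * (a - b) * y + x * (c - e) * y = x * ((a + c) - (b + e)) * y"
      by (simp add: algebra_simps)
    ultimately show "J n d (x * ((a + c) - (b + e)) * y)" by simp
  qed
qed

lemma xc_neg: "xc n d a b \<Longrightarrow> xc n d (- a) (- b)"
proof -
  assume h: "xc n d a b"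
  show ?thesis unfolding xc_def
  proof (intro ballI)
    fix x y assume "x \<in> Sp n d" "y \<in> Sp n d"
    then have "J n d (- (x * (a - b) * y))" using h unfolding xc_def by (simp add: J_neg)
    moreover have "- (x * (a - b) * y) = x * (- a - - b) * y" by (simp add: algebra_simps)
    ultimately show "J n d (x * (- a - - b) * y)" by simp
  qed
qed

lemma xc_diff: "xc n d a b \<Longrightarrow> xc n d c e \<Longrightarrow> xc n d (a - c) (b - e)"
  using xc_add[of n d a b "- c" "- e"] xc_neg[of n d c e] by simp

lemma xc_sum: "(\<And>a. a \<in> A \<Longrightarrow> xc n d (f a) (g a)) \<Longrightarrow> xc n d (sum f A) (sum g A)"
proof (cases "finite A")
  case True
  then show "(\<And>a. a \<in> A \<Longrightarrow> xc n d (f a) (g a)) \<Longrightarrow> xc n d (sum f A) (sum g A)"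
    by (induction A rule: finite_induct) (auto intro: xc_add xc_eq)
qed (simp add: xc_eq)

lemma xc_mul_left: "z \<in> Sp n d \<Longrightarrow> xc n d a b \<Longrightarrow> xc n d (z * a) (z * b)"
proof -
  assume z: "z \<in> Sp n d" and h: "xc n d a b"
  show ?thesis unfolding xc_def
  proof (intro ballI)
    fix x y assume "x \<in> Sp n d" "y \<in> Sp n d"
    then have "J n d ((x * z) * (a - b) * y)" using h z Sp_mul unfolding xc_def by blast
    moreover have "(x * z) * (a - b) * y = x * (z * a - z * b) * y" by (simp add: algebra_simps)
    ultimately show "J n d (x * (z * a - z * b) * y)" by simp
  qed
qed

lemma xc_mul_right: "z \<in> Sp n d \<Longrightarrow> xc n d a b \<Longrightarrow> xc n d (a * z) (b * z)"
proof -
  assume z: "z \<in> Sp n d" and h: "xc n d a b"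
  show ?thesis unfolding xc_def
  proof (intro ballI)
    fix x y assume "x \<in> Sp n d" "y \<in> Sp n d"
    then have "J n d (x * (a - b) * (z * y))" using h z Sp_mul unfolding xc_def by blast
    moreover have "x * (a - b) * (z * y) = x * (a * z - b * z) * y" by (simp add: algebra_simps)
    ultimately show "J n d (x * (a * z - b * z) * y)" by simp
  qed
qed

lemma Sp_of_int: "of_int k \<in> Sp n d"
  using Sp_of_int_mul[OF Sp_one] by simp

lemma xc_of_int_mul: "xc n d a b \<Longrightarrow> xc n d (of_int k * a) (of_int k * b)"
  by (rule xc_mul_left[OF Sp_of_int])

lemma xc_of_nat_mul: "xc n d a b \<Longrightarrow> xc n d (of_nat k * a) (of_nat k * b)"
  by (rule xc_mul_left[OF Sp_of_nat])

lemma xc_J: "xc n d a b \<Longrightarrow> x \<in> Sp n d \<Longrightarrow> J n d (x * (a - b))"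
  unfolding xc_def using Sp_one by fastforce

lemma Abs_sub: "Abs_fa (sub_el a b) = Abs_fa a - Abs_fa b"
  by (simp add: minus_fa_def Abs_fa_inverse)

lemma Abs_mulgn: "Abs_fa (mul_el (gn g) (gn h)) = G g * G h"
  by (simp add: G_def M_def times_fa_def Abs_fa_inverse)

lemma xc_bra: "valid_gen n d g \<Longrightarrow> valid_gen n d h \<Longrightarrow>
    xc n d (G g * G h) (G h * G g + Abs_fa (bra n g h))"
proof -
  assume vg: "valid_gen n d g" and vh: "valid_gen n d h"
  have eq: "Abs_fa (commrel n g h) = G g * G h - (G h * G g + Abs_fa (bra n g h))"
    by (simp add: commrel_def Abs_sub Abs_mulgn)
  show ?thesis unfolding xc_def using J_comm[OF _ _ vg vh] by (simp add: eq[symmetric])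
qed

lemma Abs_zero_el: "Abs_fa zero_el = 0" by (simp add: zero_fa_def)

lemma Abs_smult_kd: "Abs_fa (smult_el (kd a b) (gn g)) = (if a = b then G g else 0)"
  by (auto simp: kd_def smult_el_def G_def M_def zero_fa_def zero_el_def)

lemma Abs_smult_nkd: "Abs_fa (smult_el (- kd a b) (gn g)) = (if a = b then - G g else 0)"
  by (auto simp: kd_def smult_el_def G_def M_def zero_fa_def zero_el_def uminus_fa_def Abs_fa_inverse)




lemma Sp_G: "valid_gen n d g \<Longrightarrow> G g \<in> Sp n d"
  unfolding G_def by (rule Sp.gen) simp

lemma br_EQ: "l < n \<Longrightarrow> i < d l \<Longrightarrow> j < d l \<Longrightarrow> c < d l \<Longrightarrow>
  xc n d (G (E l i j) * G (Q l c)) (G (Q l c) * G (E l i j) + (if j = c then G (Q l i) else 0))"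
  using xc_bra[of n d "E l i j" "Q l c"] by (simp add: Abs_smult_kd)

lemma br_EE: "l < n \<Longrightarrow> i < d l \<Longrightarrow> j < d l \<Longrightarrow> c < d l \<Longrightarrow> m < d l \<Longrightarrow>
  xc n d (G (E l i j) * G (E l c m)) (G (E l c m) * G (E l i j) +
     ((if j = c then G (E l i m) else 0) - (if i = m then G (E l c j) else 0)))"
  using xc_bra[of n d "E l i j" "E l c m"] by (simp add: Abs_smult_kd Abs_sub)

lemma br_EE': "l < n \<Longrightarrow> i < d l \<Longrightarrow> j < d l \<Longrightarrow> c < d l \<Longrightarrow> m < d l \<Longrightarrow>
  xc n d (G (E l i j) * G (E' l c m)) (G (E' l c m) * G (E l i j))"
  using xc_bra[of n d "E l i j" "E' l c m"] by (simp add: Abs_zero_el)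

lemma br_E'Q: "l < n \<Longrightarrow> i < d l \<Longrightarrow> j < d l \<Longrightarrow> c < d l \<Longrightarrow>
  xc n d (G (E' l i j) * G (Q l c)) (G (Q l c) * G (E' l i j))"
  using xc_bra[of n d "E' l i j" "Q l c"] by (simp add: Abs_zero_el)




primrec mpow :: "nat \<Rightarrow> (nat \<Rightarrow> nat \<Rightarrow> fa) \<Rightarrow> nat \<Rightarrow> nat \<Rightarrow> nat \<Rightarrow> fa" where
  "mpow D g 0 a b = (if a = b then 1 else 0)"
| "mpow D g (Suc s) a b = (\<Sum>c<D. g a c * mpow D g s c b)"

lemma mpow_Suc_right: "a < D \<Longrightarrow> b < D \<Longrightarrow> mpow D g (Suc s) a b = (\<Sum>c<D. mpow D g s a c * g c b)"
proof (induction s arbitrary: a)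
  case 0
  have "(\<Sum>c<D. g a c * (if c = b then 1 else 0)) = (\<Sum>c<D. if c = b then g a c else 0)"
    by (rule sum.cong) auto
  also have "\<dots> = g a b" using 0 by simp
  finally have 1: "(\<Sum>c<D. g a c * (if c = b then 1 else 0)) = g a b" .
  have "(\<Sum>c<D. (if a = c then 1 else 0) * g c b) = (\<Sum>c<D. if a = c then g c b else 0)"
    by (rule sum.cong) auto
  also have "\<dots> = g a b" using 0 by simp
  finally have 2: "(\<Sum>c<D. (if a = c then 1 else 0) * g c b) = g a b" .
  show ?case using 1 2 by simp
next
  case (Suc s)
  have "mpow D g (Suc (Suc s)) a b = (\<Sum>c<D. g a c * (\<Sum>m<D. mpow D g s c m * g m b))"
    using Suc by simp
  also have "\<dots> = (\<Sum>c<D. \<Sum>m<D. g a c * mpow D g s c m * g m b)"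
    by (simp add: sum_distrib_left mult.assoc)
  also have "\<dots> = (\<Sum>m<D. \<Sum>c<D. g a c * mpow D g s c m * g m b)"
    by (rule sum.swap)
  also have "\<dots> = (\<Sum>m<D. (\<Sum>c<D. g a c * mpow D g s c m) * g m b)"
    by (simp add: sum_distrib_right)
  finally show ?case by simp
qed

lemma Sp_mpow: "(\<And>i j. g i j \<in> Sp n d) \<Longrightarrow> mpow D g s a b \<in> Sp n d"
  by (induction s arbitrary: a) (auto intro!: Sp_sum Sp_mul)

lemma xc_comm_mpow:
  assumes z: "z \<in> Sp n d" and gs: "\<And>i j. g i j \<in> Sp n d"
    and zc: "\<And>i j. i < D \<Longrightarrow> j < D \<Longrightarrow> xc n d (z * g i j) (g i j * z)"
  shows "a < D \<Longrightarrow> xc n d (z * mpow D g s a b) (mpow D g s a b * z)"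
proof (induction s arbitrary: a)
  case 0 then show ?case by (simp add: xc_eq)
next
  case (Suc s)
  have "xc n d (z * g a c * mpow D g s c b) (g a c * mpow D g s c b * z)" if "c < D" "a < D" for c
  proof -
    have 1: "xc n d (z * g a c * mpow D g s c b) (g a c * z * mpow D g s c b)"
      by (rule xc_mul_right[OF Sp_mpow[OF gs] zc[OF that(2) that(1)]])
    have 2: "xc n d (g a c * z * mpow D g s c b) (g a c * mpow D g s c b * z)"
      using xc_mul_left[OF gs Suc.IH[OF that(1)], of a c] by (simp add: mult.assoc)
    show ?thesis using xc_trans[OF 1 2] .
  qed
  then have "xc n d (\<Sum>c<D. z * g a c * mpow D g s c b) (\<Sum>c<D. g a c * mpow D g s c b * z)"
    using Suc.prems by (intro xc_sum) simp
  moreover have "z * mpow D g (Suc s) a b = (\<Sum>c<D. z * g a c * mpow D g s c b)"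
    by (simp add: sum_distrib_left mult.assoc)
  moreover have "mpow D g (Suc s) a b * z = (\<Sum>c<D. g a c * mpow D g s c b * z)"
    by (simp add: sum_distrib_right)
  ultimately show ?case by simp
qed




locale lv = fixes n :: nat and d :: "nat \<Rightarrow> nat" and l :: nat assumes ln: "l < n"
begin

abbreviation "DD \<equiv> d l"
definition "e i j = (if i < DD \<and> j < DD then G (E l i j) else 0)"
definition "e' i j = (if i < DD \<and> j < DD then G (E' l i j) else 0)"
definition "q c = (if c < DD then G (Q l c) else 0)"
definition "p c = (if c < DD then G (P l c) else 0)"
definition "T i j = e j i"

lemma e_in: "i < DD \<Longrightarrow> j < DD \<Longrightarrow> e i j = G (E l i j)" by (simp add: e_def)
lemma e'_in: "i < DD \<Longrightarrow> j < DD \<Longrightarrow> e' i j = G (E' l i j)" by (simp add: e'_def)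
lemma q_in: "i < DD \<Longrightarrow> q i = G (Q l i)" by (simp add: q_def)
lemma p_in: "i < DD \<Longrightarrow> p i = G (P l i)" by (simp add: p_def)

lemma Sp_e: "e i j \<in> Sp n d" by (simp add: e_def ln Sp_G)
lemma Sp_e': "e' i j \<in> Sp n d" by (simp add: e'_def ln Sp_G)
lemma Sp_q: "q i \<in> Sp n d" by (simp add: q_def ln Sp_G)
lemma Sp_p: "p i \<in> Sp n d" by (simp add: p_def ln Sp_G)
lemma Sp_T: "T i j \<in> Sp n d" by (simp add: T_def Sp_e)

lemma bEQ: "i < DD \<Longrightarrow> j < DD \<Longrightarrow> c < DD \<Longrightarrow>
  xc n d (e i j * q c) (q c * e i j + (if j = c then q i else 0))"
proof -
  assume h: "i < DD" "j < DD" "c < DD"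
  have "(if j = c then q i else 0) = (if j = c then G (Q l i) else 0)" using h by (simp add: q_in)
  then show ?thesis using br_EQ[OF ln, of i d j c] h by (simp add: e_in q_in split del: if_split)
qed

lemma bEE: "i < DD \<Longrightarrow> j < DD \<Longrightarrow> c < DD \<Longrightarrow> m < DD \<Longrightarrow>
  xc n d (e i j * e c m) (e c m * e i j + ((if j = c then e i m else 0) - (if i = m then e c j else 0)))"
proof -
  assume h: "i < DD" "j < DD" "c < DD" "m < DD"
  have "(if j = c then e i m else 0) = (if j = c then G (E l i m) else 0)"
    "(if i = m then e c j else 0) = (if i = m then G (E l c j) else 0)" using h by (simp_all add: e_in)
  then show ?thesis using br_EE[OF ln, of i d j c m] h by (simp add: e_in split del: if_split)
qed

lemma bEE': "xc n d (e i j * e' c m) (e' c m * e i j)"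
  using br_EE'[OF ln, of i d j c m] by (auto simp: e_def e'_def xc_eq)

lemma bE'Q: "xc n d (q c * e' i j) (e' i j * q c)"
  using br_E'Q[OF ln, of i d j c] by (auto simp: e'_def q_def xc_eq intro: xc_sym)

lemma Jdiag: "x \<in> Sp n d \<Longrightarrow> J n d (x * (e i j + e' i j))"
  using J_diag[OF _ ln] by (auto simp: e_def e'_def)

lemma stepB: "a < DD \<Longrightarrow> xc n d (q c * mpow DD e' s a b) (mpow DD e' s a b * q c)"
  by (rule xc_comm_mpow[OF Sp_q Sp_e' bE'Q])

lemma comm_e_mpow': "a < DD \<Longrightarrow> xc n d (e i j * mpow DD e' s a b) (mpow DD e' s a b * e i j)"
  by (rule xc_comm_mpow[OF Sp_e Sp_e' bEE'])

lemma stepC: "a < DD \<Longrightarrow> b < DD \<Longrightarrow> x \<in> Sp n d \<Longrightarrow>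
   J n d (x * mpow DD e' s a b - (-1) ^ s * (x * mpow DD T s b a))"
proof (induction s arbitrary: x b)
  case 0 then show ?case by simp
next
  case (Suc s)
  have tm: "J n d (x * (mpow DD e' s a c * e' c b) - (-1) ^ Suc s * (x * (T b c * mpow DD T s c a)))"
    if c: "c < DD" for c
  proof -
    have M: "mpow DD e' s a c \<in> Sp n d" by (rule Sp_mpow[OF Sp_e'])
    have 1: "J n d ((x * mpow DD e' s a c) * (e c b + e' c b))"
      by (rule Jdiag[OF Sp_mul[OF Suc.prems(3) M]])
    have 2: "J n d (x * (e c b * mpow DD e' s a c - mpow DD e' s a c * e c b))"
      by (rule xc_J[OF comm_e_mpow'[OF Suc.prems(1)] Suc.prems(3)])
    have 3: "J n d ((x * e c b) * mpow DD e' s a c - (-1) ^ s * ((x * e c b) * mpow DD T s c a))"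
      by (rule Suc.IH[OF Suc.prems(1) c Sp_mul[OF Suc.prems(3) Sp_e]])
    have "J n d ((x * mpow DD e' s a c) * (e c b + e' c b)
             + x * (e c b * mpow DD e' s a c - mpow DD e' s a c * e c b)
             - ((x * e c b) * mpow DD e' s a c - (-1) ^ s * ((x * e c b) * mpow DD T s c a)))"
      by (intro J_diff J_add 1 2 3)
    moreover have "(x * mpow DD e' s a c) * (e c b + e' c b)
             + x * (e c b * mpow DD e' s a c - mpow DD e' s a c * e c b)
             - ((x * e c b) * mpow DD e' s a c - (-1) ^ s * ((x * e c b) * mpow DD T s c a))
           = x * (mpow DD e' s a c * e' c b) - (-1) ^ Suc s * (x * (T b c * mpow DD T s c a))"
      by (simp add: algebra_simps T_def)
    ultimately show ?thesis by simp
  qed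
  have "J n d (\<Sum>c<DD. x * (mpow DD e' s a c * e' c b) - (-1) ^ Suc s * (x * (T b c * mpow DD T s c a)))"
    by (rule J_sum, rule tm) simp
  moreover have "(\<Sum>c<DD. x * (mpow DD e' s a c * e' c b) - (-1) ^ Suc s * (x * (T b c * mpow DD T s c a)))
     = x * mpow DD e' (Suc s) a b - (-1) ^ Suc s * (x * mpow DD T (Suc s) b a)"
  proof -
    have "mpow DD e' (Suc s) a b = (\<Sum>c<DD. mpow DD e' s a c * e' c b)"
      by (rule mpow_Suc_right[OF Suc.prems(1,2)])
    moreover have "mpow DD T (Suc s) b a = (\<Sum>c<DD. T b c * mpow DD T s c a)" by simp
    ultimately show ?thesis
      by (simp only: sum_subtractf sum_distrib_left)
  qed
  ultimately show ?case by simp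
qed

end



context lv begin

definition Eop :: "(nat \<Rightarrow> fa) \<Rightarrow> nat \<Rightarrow> fa" where "Eop w c = (\<Sum>m<DD. e c m * w m)"
definition wE :: "(nat \<Rightarrow> fa) \<Rightarrow> nat \<Rightarrow> fa" where "wE w c = Eop w c - of_nat DD * w c"
definition cov :: "(nat \<Rightarrow> fa) \<Rightarrow> bool" where
  "cov w \<longleftrightarrow> (\<forall>c. w c \<in> Sp n d) \<and>
     (\<forall>i j c. i < DD \<longrightarrow> j < DD \<longrightarrow> c < DD \<longrightarrow>
        xc n d (e i j * w c) (w c * e i j + (if j = c then w i else 0)))"

lemma cov_q: "cov q"
  unfolding cov_def using Sp_q bEQ by blast

lemma Sp_Eop: "(\<And>c. w c \<in> Sp n d) \<Longrightarrow> Eop w c \<in> Sp n d"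
  unfolding Eop_def by (intro Sp_sum Sp_mul Sp_e) auto

lemma Sp_wE: "(\<And>c. w c \<in> Sp n d) \<Longrightarrow> wE w c \<in> Sp n d"
  unfolding wE_def by (intro Sp_diff Sp_Eop Sp_of_nat_mul) auto

lemma cov_wE:
  assumes cw: "cov w" shows "cov (wE w)"
proof -
  have Sw: "\<And>c. w c \<in> Sp n d" and Cw: "\<And>i j c. i < DD \<Longrightarrow> j < DD \<Longrightarrow> c < DD \<Longrightarrow>
        xc n d (e i j * w c) (w c * e i j + (if j = c then w i else 0))"
    using cw unfolding cov_def by auto
  have main: "xc n d (e i j * wE w c) (wE w c * e i j + (if j = c then wE w i else 0))"
    if ij: "i < DD" "j < DD" "c < DD" for i j c
  proof -
    define R where "R m = e c m * w m * e i j + (if j = m then e c m * w i else 0)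
        + (if j = c then e i m * w m else 0) - (if i = m then e c j * w m else 0)" for m
    have Rm: "xc n d (e i j * e c m * w m) (R m)" if m: "m < DD" for m
    proof -
      have h1: "xc n d (e i j * e c m * w m)
         ((e c m * e i j + ((if j = c then e i m else 0) - (if i = m then e c j else 0))) * w m)"
        by (rule xc_mul_right[OF Sw bEE[OF ij(1,2,3) m]])
      have h2: "xc n d (e c m * (e i j * w m)) (e c m * (w m * e i j + (if j = m then w i else 0)))"
        by (rule xc_mul_left[OF Sp_e Cw[OF ij(1,2) m]])
      have h3: "xc n d (e c m * (e i j * w m) + ((if j = c then e i m else 0) - (if i = m then e c j else 0)) * w m)
          (e c m * (w m * e i j + (if j = m then w i else 0)) + ((if j = c then e i m else 0) - (if i = m then e c j else 0)) * w m)"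
        by (rule xc_add[OF h2 xc_eq[OF refl]])
      have eq1: "(e c m * e i j + ((if j = c then e i m else 0) - (if i = m then e c j else 0))) * w m
          = e c m * (e i j * w m) + ((if j = c then e i m else 0) - (if i = m then e c j else 0)) * w m"
        by (simp add: algebra_simps)
      have eq2: "e c m * (w m * e i j + (if j = m then w i else 0)) + ((if j = c then e i m else 0) - (if i = m then e c j else 0)) * w m
          = R m"
        unfolding R_def by (cases "j = c"; cases "i = m"; cases "j = m"; simp add: algebra_simps)
      show ?thesis using xc_trans[OF h1[unfolded eq1] h3] eq2 by simp
    qed
    have sumR: "(\<Sum>m<DD. R m) = Eop w c * e i j + (if j = c then Eop w i else 0)"
    proof -
      have "(\<Sum>m<DD. R m) = (\<Sum>m<DD. e c m * w m * e i j) + (\<Sum>m<DD. if j = m then e c m * w i else 0)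
          + (\<Sum>m<DD. if j = c then e i m * w m else 0) - (\<Sum>m<DD. if i = m then e c j * w m else 0)"
        unfolding R_def by (simp add: sum.distrib sum_subtractf)
      also have "\<dots> = Eop w c * e i j + e c j * w i + (if j = c then Eop w i else 0) - e c j * w i"
        using ij by (simp add: Eop_def sum_distrib_right)
      finally show ?thesis by simp
    qed
    have S1: "xc n d (\<Sum>m<DD. e i j * e c m * w m) (\<Sum>m<DD. R m)"
      by (rule xc_sum) (simp add: Rm)
    have S2: "xc n d (of_nat DD * (e i j * w c)) (of_nat DD * (w c * e i j + (if j = c then w i else 0)))"
      by (rule xc_of_nat_mul[OF Cw[OF ij]])
    have S: "xc n d ((\<Sum>m<DD. e i j * e c m * w m) - of_nat DD * (e i j * w c))
        ((\<Sum>m<DD. R m) - of_nat DD * (w c * e i j + (if j = c then w i else 0)))"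
      by (rule xc_diff[OF S1 S2])
    have eqL: "e i j * wE w c = (\<Sum>m<DD. e i j * e c m * w m) - of_nat DD * (e i j * w c)"
      by (simp add: wE_def Eop_def right_diff_distrib sum_distrib_left mult.assoc mult_of_nat_commute)
    have eqR: "(\<Sum>m<DD. R m) - of_nat DD * (w c * e i j + (if j = c then w i else 0))
        = wE w c * e i j + (if j = c then wE w i else 0)"
      unfolding sumR wE_def by (cases "j = c"; simp add: algebra_simps)
    show ?thesis using S eqL eqR by simp
  qed
  show ?thesis unfolding cov_def using Sp_wE[of w, OF Sw] main by blast
qed

lemma stepD: "cov w \<Longrightarrow> a < DD \<Longrightarrow> xc n d (\<Sum>c<DD. w c * mpow DD T s c a) ((wE ^^ s) w a)"
proof (induction s arbitrary: w)
  case 0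
  have "(\<Sum>c<DD. w c * mpow DD T 0 c a) = (\<Sum>c<DD. if c = a then w c else 0)"
    by (rule sum.cong) auto
  also have "\<dots> = w a" using 0 by simp
  finally show ?case by (simp add: xc_eq)
next
  case (Suc s)
  have Sw: "\<And>c. w c \<in> Sp n d" and Cw: "\<And>i j c. i < DD \<Longrightarrow> j < DD \<Longrightarrow> c < DD \<Longrightarrow>
        xc n d (e i j * w c) (w c * e i j + (if j = c then w i else 0))"
    using Suc.prems(1) unfolding cov_def by auto
  have inner: "xc n d (\<Sum>c<DD. w c * e c' c) (wE w c')" if c': "c' < DD" for c'
  proof -
    have t: "xc n d (w c * e c' c) (e c' c * w c - w c')" if c: "c < DD" for c
    proof -
      have "xc n d (w c * e c' c + w c' - w c') (e c' c * w c - w c')"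
        using xc_diff[OF xc_sym[OF Cw[OF c' c c]] xc_eq[OF refl, of n d "w c'"]] by simp
      then show ?thesis by simp
    qed
    have "xc n d (\<Sum>c<DD. w c * e c' c) (\<Sum>c<DD. e c' c * w c - w c')"
      by (rule xc_sum) (simp add: t)
    moreover have "(\<Sum>c<DD. e c' c * w c - w c') = wE w c'"
      by (simp add: wE_def Eop_def sum_subtractf)
    ultimately show ?thesis by simp
  qed
  have A: "xc n d (\<Sum>c'<DD. (\<Sum>c<DD. w c * e c' c) * mpow DD T s c' a)
                  (\<Sum>c'<DD. wE w c' * mpow DD T s c' a)"
    by (rule xc_sum) (simp add: xc_mul_right[OF Sp_mpow[OF Sp_T] inner])
  have B: "xc n d (\<Sum>c'<DD. wE w c' * mpow DD T s c' a) ((wE ^^ s) (wE w) a)"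
    by (rule Suc.IH[OF cov_wE[OF Suc.prems(1)] Suc.prems(2)])
  have eq: "(\<Sum>c<DD. w c * mpow DD T (Suc s) c a) = (\<Sum>c'<DD. (\<Sum>c<DD. w c * e c' c) * mpow DD T s c' a)"
  proof -
    have "(\<Sum>c<DD. w c * mpow DD T (Suc s) c a) = (\<Sum>c<DD. \<Sum>c'<DD. w c * e c' c * mpow DD T s c' a)"
      by (simp add: T_def sum_distrib_left mult.assoc)
    also have "\<dots> = (\<Sum>c'<DD. \<Sum>c<DD. w c * e c' c * mpow DD T s c' a)"
      by (rule sum.swap)
    also have "\<dots> = (\<Sum>c'<DD. (\<Sum>c<DD. w c * e c' c) * mpow DD T s c' a)"
      by (simp add: sum_distrib_right)
    finally show ?thesis .
  qed
  show ?case using xc_trans[OF A B] eq by (simp add: funpow_Suc_right del: funpow.simps)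
qed

end



definition cf :: "nat \<Rightarrow> nat \<Rightarrow> nat \<Rightarrow> int" where
  "cf D s t = (- int D) ^ (s - t) * int (s choose t)"

lemma cf_Suc: "cf D (Suc s) t = (if t = 0 then 0 else cf D s (t - 1)) - int D * cf D s t"
proof (cases t)
  case 0 then show ?thesis by (simp add: cf_def)
next
  case (Suc t')
  show ?thesis
  proof (cases "t' < s")
    case True
    then have "Suc s - Suc t' = Suc (s - Suc t')" "s - t' = Suc (s - Suc t')" by auto
    then show ?thesis using Suc by (simp add: cf_def algebra_simps)
  next
    case False
    then show ?thesis using Suc by (cases "t' = s") (simp_all add: cf_def binomial_eq_0)
  qed
qed

context lv begin

lemma mul_ofint_swap: "(x::fa) * (of_int k * y) = of_int k * (x * y)"
  by (metis mult.assoc mult_of_int_commute)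

lemma Eop_lin: "Eop (\<lambda>c. \<Sum>t\<in>A. of_int (k t) * U t c) a = (\<Sum>t\<in>A. of_int (k t) * Eop (U t) a)"
proof -
  have "Eop (\<lambda>c. \<Sum>t\<in>A. of_int (k t) * U t c) a = (\<Sum>m<DD. \<Sum>t\<in>A. of_int (k t) * (e a m * U t m))"
    unfolding Eop_def by (simp only: sum_distrib_left mul_ofint_swap)
  also have "\<dots> = (\<Sum>t\<in>A. \<Sum>m<DD. of_int (k t) * (e a m * U t m))" by (rule sum.swap)
  also have "\<dots> = (\<Sum>t\<in>A. of_int (k t) * Eop (U t) a)" by (simp add: Eop_def sum_distrib_left)
  finally show ?thesis .
qed

lemma binom: "(wE ^^ s) w a = (\<Sum>t\<le>s. of_int (cf DD s t) * (Eop ^^ t) w a)"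
proof (induction s arbitrary: a)
  case 0 then show ?case by (simp add: cf_def)
next
  case (Suc s)
  define U where "U t = (Eop ^^ t) w" for t
  have IH: "(wE ^^ s) w = (\<lambda>c. \<Sum>t\<le>s. of_int (cf DD s t) * U t c)"
    using Suc.IH unfolding U_def by auto
  have "(wE ^^ Suc s) w a = Eop ((wE ^^ s) w) a - of_nat DD * (wE ^^ s) w a"
    by (simp add: wE_def)
  also have "\<dots> = (\<Sum>t\<le>s. of_int (cf DD s t) * U (Suc t) a) - of_nat DD * (\<Sum>t\<le>s. of_int (cf DD s t) * U t a)"
    unfolding IH Eop_lin by (simp add: U_def)
  also have "\<dots> = (\<Sum>t\<le>Suc s. of_int (cf DD (Suc s) t) * U t a)"
  proof -
    have "(\<Sum>t\<le>Suc s. of_int (cf DD (Suc s) t) * U t a)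
       = (\<Sum>t\<le>Suc s. (if t = 0 then 0 else of_int (cf DD s (t - 1)) * U t a))
         - of_nat DD * (\<Sum>t\<le>Suc s. of_int (cf DD s t) * U t a)"
      by (simp add: cf_Suc sum_subtractf sum_distrib_left algebra_simps if_distrib[of "\<lambda>x. of_int x * U _ a"] cong: if_cong)
    also have "(\<Sum>t\<le>Suc s. (if t = 0 then 0 else of_int (cf DD s (t - 1)) * U t a))
        = (\<Sum>t\<le>s. of_int (cf DD s t) * U (Suc t) a)"
      by (simp add: sum.atMost_Suc_shift del: sum.atMost_Suc)
    also have "(\<Sum>t\<le>Suc s. of_int (cf DD s t) * U t a) = (\<Sum>t\<le>s. of_int (cf DD s t) * U t a)"
      by (simp add: cf_def binomial_eq_0)
    finally show ?thesis by simp
  qed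
  finally show ?case by (simp add: U_def)
qed

lemma Eop_mpow: "(Eop ^^ t) q a = (\<Sum>b<DD. mpow DD e t a b * q b)"
proof (induction t arbitrary: a)
  case 0
  have "(\<Sum>b<DD. mpow DD e 0 a b * q b) = (\<Sum>b<DD. if a = b then q b else 0)"
    by (rule sum.cong) auto
  also have "\<dots> = q a" by (simp add: q_def)
  finally show ?case by simp
next
  case (Suc t)
  have "(Eop ^^ Suc t) q a = (\<Sum>m<DD. \<Sum>b<DD. e a m * mpow DD e t m b * q b)"
    by (simp add: Eop_def Suc.IH sum_distrib_left mult.assoc)
  also have "\<dots> = (\<Sum>b<DD. \<Sum>m<DD. e a m * mpow DD e t m b * q b)" by (rule sum.swap)
  also have "\<dots> = (\<Sum>b<DD. mpow DD e (Suc t) a b * q b)" by (simp add: sum_distrib_right)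
  finally show ?case .
qed

end



definition Ls :: "nat \<Rightarrow> nat \<Rightarrow> nat list set" where
  "Ls D t = {js. length js = t \<and> set js \<subseteq> {..<D}}"

lemma Ls_0: "Ls D 0 = {[]}" by (auto simp: Ls_def)

lemma Ls_Suc: "Ls D (Suc t) = (\<lambda>(c, js). c # js) ` ({..<D} \<times> Ls D t)"
proof
  show "Ls D (Suc t) \<subseteq> (\<lambda>(c, js). c # js) ` ({..<D} \<times> Ls D t)"
  proof
    fix xs assume "xs \<in> Ls D (Suc t)"
    then obtain c js where "xs = c # js" "length js = t" "set (c # js) \<subseteq> {..<D}"
      unfolding Ls_def by (cases xs) auto
    then show "xs \<in> (\<lambda>(c, js). c # js) ` ({..<D} \<times> Ls D t)"
      unfolding Ls_def by (auto intro!: image_eqI[of _ _ "(c, js)"])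
  qed
qed (auto simp: Ls_def)

lemma sum_Ls_Suc: "(\<Sum>xs\<in>Ls D (Suc t). f xs) = (\<Sum>c<D. \<Sum>js\<in>Ls D t. f (c # js))"
proof -
  have inj: "inj_on (\<lambda>(c, js). c # js) ({..<D} \<times> Ls D t)" by (auto simp: inj_on_def)
  have "(\<Sum>xs\<in>Ls D (Suc t). f xs) = (\<Sum>x\<in>{..<D} \<times> Ls D t. f ((\<lambda>(c, js). c # js) x))"
    unfolding Ls_Suc by (rule sum.reindex[OF inj, unfolded comp_def])
  also have "\<dots> = (\<Sum>(c, js)\<in>{..<D} \<times> Ls D t. f (c # js))"
    by (rule sum.cong) auto
  also have "\<dots> = (\<Sum>c<D. \<Sum>js\<in>Ls D t. f (c # js))"
    by (rule sum.cartesian_product[symmetric])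
  finally show ?thesis .
qed

definition word :: "(nat \<Rightarrow> nat \<Rightarrow> nat \<Rightarrow> gen) \<Rightarrow> nat \<Rightarrow> nat list \<Rightarrow> gen list" where
  "word C l xs = map (\<lambda>k. C l (xs ! k) (xs ! Suc k)) [0..<length xs - 1] @ [Q l (xs ! (length xs - 1))]"

lemma word_single: "word C l [a] = [Q l a]" by (simp add: word_def)

lemma word_cons: "word C l (a # b # js) = C l a b # word C l (b # js)"
proof -
  have "[0..<Suc (length js)] = 0 # map Suc [0..<length js]"
    by (simp add: upt_conv_Cons map_Suc_upt del: upt_Suc)
  then show ?thesis by (simp add: word_def comp_def del: upt_Suc)
qed

lemma bword_eq: "length js = t \<Longrightarrow> bword l t (a # js) = P l a # word E l (a # js)"
  by (simp add: bword_def word_def)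

lemma bword'_eq: "length js = t \<Longrightarrow> bword' l t (a # js) = P l a # word E' l (a # js)"
  by (simp add: bword'_def word_def)

lemma M_Cons: "M (x # xs) = G x * M xs"
  using M_append[of "[x]" xs] by (simp add: G_def)

context lv begin

lemma mpow_word:
  assumes gin: "\<And>i j. g i j = (if i < DD \<and> j < DD then G (C l i j) else 0)"
  shows "a < DD \<Longrightarrow> (\<Sum>b<DD. mpow DD g t a b * q b) = (\<Sum>js\<in>Ls DD t. M (word C l (a # js)))"
proof (induction t arbitrary: a)
  case 0
  have "(\<Sum>b<DD. mpow DD g 0 a b * q b) = (\<Sum>b<DD. if a = b then q b else 0)"
    by (rule sum.cong) auto
  also have "\<dots> = q a" using 0 by simp
  finally show ?case using 0 by (simp add: Ls_0 word_single q_def G_def)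
next
  case (Suc t)
  have "(\<Sum>b<DD. mpow DD g (Suc t) a b * q b) = (\<Sum>c<DD. g a c * (\<Sum>b<DD. mpow DD g t c b * q b))"
  proof -
    have "(\<Sum>b<DD. mpow DD g (Suc t) a b * q b) = (\<Sum>b<DD. \<Sum>c<DD. g a c * mpow DD g t c b * q b)"
      by (simp add: sum_distrib_right)
    also have "\<dots> = (\<Sum>c<DD. \<Sum>b<DD. g a c * mpow DD g t c b * q b)" by (rule sum.swap)
    also have "\<dots> = (\<Sum>c<DD. g a c * (\<Sum>b<DD. mpow DD g t c b * q b))"
      by (simp add: sum_distrib_left mult.assoc)
    finally show ?thesis .
  qed
  also have "\<dots> = (\<Sum>c<DD. \<Sum>js\<in>Ls DD t. M (word C l (a # c # js)))"
    by (rule sum.cong) (simp_all add: Suc.IH gin Suc.prems sum_distrib_left word_cons M_Cons)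
  also have "\<dots> = (\<Sum>js\<in>Ls DD (Suc t). M (word C l (a # js)))"
    by (simp add: sum_Ls_Suc)
  finally show ?case .
qed

lemma Abs_sum_el: "Abs_fa (sum_el (\<lambda>x. mono (f x)) A) = (\<Sum>x\<in>A. M (f x))"
proof -
  have "Rep_fa (\<Sum>x\<in>A. M (f x)) = sum_el (\<lambda>x. mono (f x)) A" by (simp add: Rep_sum Rep_M)
  then have "Abs_fa (sum_el (\<lambda>x. mono (f x)) A) = Abs_fa (Rep_fa (\<Sum>x\<in>A. M (f x)))" by simp
  then show ?thesis by (simp only: Rep_fa_inverse)
qed

lemma bgen_eq: "Abs_fa (bgen d l t) = (\<Sum>a<DD. p a * (\<Sum>b<DD. mpow DD e t a b * q b))"
proof -
  have "Abs_fa (bgen d l t) = (\<Sum>xs\<in>Ls DD (Suc t). M (bword l t xs))"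
    unfolding bgen_def Abs_sum_el by (simp add: idx_lists_def Ls_def)
  also have "\<dots> = (\<Sum>a<DD. \<Sum>js\<in>Ls DD t. p a * M (word E l (a # js)))"
    unfolding sum_Ls_Suc
    by (intro sum.cong refl) (simp add: bword_eq Ls_def M_Cons p_def)
  also have "\<dots> = (\<Sum>a<DD. p a * (\<Sum>b<DD. mpow DD e t a b * q b))"
    by (intro sum.cong refl) (simp add: mpow_word[of e E] e_def sum_distrib_left)
  finally show ?thesis .
qed

lemma bgen'_eq: "Abs_fa (bgen' d l t) = (-1) ^ t * (\<Sum>a<DD. p a * (\<Sum>b<DD. mpow DD e' t a b * q b))"
proof -
  have "Abs_fa (sum_el (\<lambda>is. mono (bword' l t is)) (idx_lists d l t)) = (\<Sum>xs\<in>Ls DD (Suc t). M (bword' l t xs))"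
    unfolding Abs_sum_el by (simp add: idx_lists_def Ls_def)
  also have "\<dots> = (\<Sum>a<DD. \<Sum>js\<in>Ls DD t. p a * M (word E' l (a # js)))"
    unfolding sum_Ls_Suc
    by (intro sum.cong refl) (simp add: bword'_eq Ls_def M_Cons p_def)
  also have "\<dots> = (\<Sum>a<DD. p a * (\<Sum>b<DD. mpow DD e' t a b * q b))"
    by (intro sum.cong refl) (simp add: mpow_word[of e' E'] e'_def sum_distrib_left)
  finally have h: "Abs_fa (sum_el (\<lambda>is. mono (bword' l t is)) (idx_lists d l t)) = \<dots>" .
  have "Rep_fa (of_int ((-1) ^ t) * Abs_fa (sum_el (\<lambda>is. mono (bword' l t is)) (idx_lists d l t))) = bgen' d l t"
    unfolding Rep_of_int_mul bgen'_def by (simp add: Abs_fa_inverse)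
  then have "Abs_fa (bgen' d l t) = Abs_fa (Rep_fa (of_int ((-1) ^ t) * Abs_fa (sum_el (\<lambda>is. mono (bword' l t is)) (idx_lists d l t))))"
    by simp
  then have "Abs_fa (bgen' d l t) = of_int ((-1) ^ t) * Abs_fa (sum_el (\<lambda>is. mono (bword' l t is)) (idx_lists d l t))"
    by (simp only: Rep_fa_inverse)
  then show ?thesis using h by simp
qed

end



context lv begin

lemma J_sg: "J n d x \<Longrightarrow> J n d ((-1) ^ s * x)"
  using J_of_int_mul[where k="(-1) ^ s" and x=x and n=n and d=d] by simp

lemma final_fa:
  "J n d (Abs_fa (bgen' d l s) - (\<Sum>t\<le>s. of_int (cf DD s t) * Abs_fa (bgen d l t)))"
proof -
  define sg :: fa where "sg = (-1) ^ s"
  define M' where "M' a b = mpow DD e' s a b" for a b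
  define TT where "TT b a = mpow DD T s b a" for b a
  define A where "A = (\<Sum>a<DD. p a * (\<Sum>b<DD. M' a b * q b))"
  define Bq where "Bq = (\<Sum>a<DD. p a * (\<Sum>b<DD. q b * M' a b))"
  define Ct where "Ct = (\<Sum>a<DD. p a * (\<Sum>b<DD. q b * TT b a))"
  define Y where "Y = (\<Sum>a<DD. p a * (wE ^^ s) q a)"
  have X: "Abs_fa (bgen' d l s) = sg * A"
    unfolding bgen'_eq sg_def A_def M'_def ..
  have Yeq: "(\<Sum>t\<le>s. of_int (cf DD s t) * Abs_fa (bgen d l t)) = Y"
  proof -
    have "(\<Sum>t\<le>s. of_int (cf DD s t) * Abs_fa (bgen d l t))
        = (\<Sum>t\<le>s. \<Sum>a<DD. p a * (of_int (cf DD s t) * (Eop ^^ t) q a))"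
      unfolding bgen_eq Eop_mpow[symmetric]
      by (simp add: sum_distrib_left mul_ofint_swap)
    also have "\<dots> = (\<Sum>a<DD. \<Sum>t\<le>s. p a * (of_int (cf DD s t) * (Eop ^^ t) q a))"
      by (rule sum.swap)
    also have "\<dots> = Y"
      unfolding Y_def binom by (simp add: sum_distrib_left)
    finally show ?thesis .
  qed
  have T1: "J n d (sg * (A - Bq))"
  proof -
    have "J n d (\<Sum>a<DD. p a * ((\<Sum>b<DD. M' a b * q b) - (\<Sum>b<DD. q b * M' a b)))"
    proof (rule J_sum)
      fix a assume a: "a \<in> {..<DD}"
      have "xc n d (\<Sum>b<DD. M' a b * q b) (\<Sum>b<DD. q b * M' a b)"
        using a by (intro xc_sum) (simp add: M'_def xc_sym[OF stepB])
      then show "J n d (p a * ((\<Sum>b<DD. M' a b * q b) - (\<Sum>b<DD. q b * M' a b)))"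
        using xc_J Sp_p by blast
    qed
    moreover have "(\<Sum>a<DD. p a * ((\<Sum>b<DD. M' a b * q b) - (\<Sum>b<DD. q b * M' a b))) = A - Bq"
      unfolding A_def Bq_def by (simp add: right_diff_distrib sum_subtractf)
    ultimately show ?thesis unfolding sg_def using J_sg by simp
  qed
  have T2: "J n d (sg * (Bq - sg * Ct))"
  proof -
    have "J n d (\<Sum>a<DD. \<Sum>b<DD. (p a * q b) * M' a b - sg * ((p a * q b) * TT b a))"
      unfolding M'_def TT_def sg_def
      by (intro J_sum stepC Sp_mul Sp_p Sp_q) auto
    moreover have "(\<Sum>a<DD. \<Sum>b<DD. (p a * q b) * M' a b - sg * ((p a * q b) * TT b a)) = Bq - sg * Ct"
      unfolding Bq_def Ct_def
      by (simp add: sum_subtractf sum_distrib_left mult.assoc right_diff_distrib)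
    ultimately show ?thesis unfolding sg_def using J_sg by simp
  qed
  have T3: "J n d (Ct - Y)"
  proof -
    have "J n d (\<Sum>a<DD. p a * ((\<Sum>b<DD. q b * TT b a) - (wE ^^ s) q a))"
    proof (rule J_sum)
      fix a assume a: "a \<in> {..<DD}"
      have "xc n d (\<Sum>b<DD. q b * TT b a) ((wE ^^ s) q a)"
        unfolding TT_def using stepD[OF cov_q] a by simp
      then show "J n d (p a * ((\<Sum>b<DD. q b * TT b a) - (wE ^^ s) q a))"
        using xc_J Sp_p by blast
    qed
    moreover have "(\<Sum>a<DD. p a * ((\<Sum>b<DD. q b * TT b a) - (wE ^^ s) q a)) = Ct - Y"
      unfolding Ct_def Y_def by (simp add: right_diff_distrib sum_subtractf)
    ultimately show ?thesis by simp
  qed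
  have h1: "sg = of_int ((-1) ^ s)" unfolding sg_def by simp
  have "(of_int ((-1::int) ^ s) :: fa) * of_int ((-1) ^ s) = of_int ((-1) ^ s * (-1) ^ s)"
    by (rule of_int_mult[symmetric])
  also have "\<dots> = 1" by simp
  finally have "sg * sg = 1" unfolding h1 .
  then have ss: "sg * (sg * Ct) = Ct" by (simp add: mult.assoc[symmetric])
  have "sg * A - Y = sg * (A - Bq) + sg * (Bq - sg * Ct) + (Ct - Y)"
    by (simp add: right_diff_distrib ss)
  then have "J n d (sg * A - Y)" using J_add[OF J_add[OF T1 T2] T3] by (simp only:)
  then show ?thesis using X Yeq by simp
qed

lemma final:
  "sub_el (bgen' d l s) (sum_el (\<lambda>t. smult_el (shift_coeff (of_nat (d l)) s t) (bgen d l t)) {..s})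
    \<in> Jset n d"
proof -
  have "Rep_fa (Abs_fa (bgen' d l s) - (\<Sum>t\<le>s. of_int (cf DD s t) * Abs_fa (bgen d l t)))
      = sub_el (bgen' d l s) (sum_el (\<lambda>t. smult_el (of_int (cf DD s t)) (bgen d l t)) {..s})"
    by (simp add: Rep_diff Rep_sum Rep_of_int_mul Abs_fa_inverse)
  also have "sum_el (\<lambda>t. smult_el (of_int (cf DD s t)) (bgen d l t)) {..s}
      = sum_el (\<lambda>t. smult_el (shift_coeff (of_nat (d l)) s t) (bgen d l t)) {..s}"
    unfolding sum_el_def by (intro ext sum.cong refl) (simp add: cf_def shift_coeff_def)
  finally have eq: "Rep_fa (Abs_fa (bgen' d l s) - (\<Sum>t\<le>s. of_int (cf DD s t) * Abs_fa (bgen d l t)))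
      = sub_el (bgen' d l s) (sum_el (\<lambda>t. smult_el (shift_coeff (of_nat (d l)) s t) (bgen d l t)) {..s})" .
  from final_fa[of s] show ?thesis unfolding eq .
qed

end

theorem lemma3p22:
  fixes n :: nat and d :: "nat \<Rightarrow> nat"
  assumes "n \<ge> 1"
  shows "\<forall>l<n. \<forall>s.
    sub_el (bgen' d l s)
      (sum_el (\<lambda>t. smult_el (shift_coeff (of_nat (d l)) s t) (bgen d l t)) {..s})
    \<in> Jset n d"
  using lv.final lv.intro by blast



end
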